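(* For every $f\in C(G)$ with $\int_G f\,d\mu=0$ there exists a unique derivation $\delta_f:\mathcal{B}\to B$ such that $\delta_f(V)=VM_f$, $\delta_f(V^{-1})=-M_fV^{-1}$, and $\delta_f(M_g)=0$ for all $g\in\mathcal F$. Moreover $\delta_f$ is approximately inner and invariant.
   Context: Setup: $G$ is an infinite compact (Hausdorff) abelian group, written additively, with normalized Haar measure $\mu$, and $x_1\in G$ generates a dense cyclic subgroup; $x_n=nx_1$. $\widehat G$ is the group of continuous characters and $\mathcal{F}$ their linear span. Let $H=\ell^2(\mathbb{Z})$ with canonical basis $\{E_l\}$; $VE_l=E_{l+1}$, $M_fE_l=f(x_l)E_l$, $\mathbb{L}E_l=lE_l$. $B=C^*(V,M_f:f\in C(G))$, $\mathcal{B}$ is the $*$-subalgebra generated by $V,V^{-1},M_\chi$ ($\chi\in\widehat G$). A derivation $\delta:\mathcal B\to B$ (linear, Leibniz) is invariant if $e^{-i\theta\mathbb L}\delta(e^{i\theta\mathbb L}be^{-i\theta\mathbb L})e^{i\theta\mathbb L}=\delta(b)$ for all $\theta,b$, and approximately inner if $\delta(b)=\lim_j[y_j,b]$ in norm for some $y_j\in B$ and all $b\in\mathcal{B}$. *)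

theory Defs
  imports "HOL-Analysis.Analysis" "HOL-Probability.Probability"
begin

definition intmul :: "int \<Rightarrow> 'a::ab_group_add \<Rightarrow> 'a" where
  "intmul n x = (if 0 \<le> n then (\<Sum>_\<in>{..<nat n}. x) else - (\<Sum>_\<in>{..<nat (- n)}. x))"

definition haar_prob :: "'g::{topological_group_add, ab_group_add} measure \<Rightarrow> bool" where
  "haar_prob \<mu> \<longleftrightarrow> prob_space \<mu> \<and> sets \<mu> = sets borel \<and>
     (\<forall>a. \<forall>A\<in>sets \<mu>. emeasure \<mu> ((\<lambda>x. a + x) ` A) = emeasure \<mu> A)"

definition is_character :: "('g::{topological_group_add, ab_group_add} \<Rightarrow> complex) \<Rightarrow> bool" where
  "is_character ch \<longleftrightarrow> continuous_on UNIV ch \<and> (\<forall>a b. ch (a + b) = ch a * ch b) \<and>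
     (\<forall>a. cmod (ch a) = 1)"

definition trig_polys :: "('g::{topological_group_add, ab_group_add} \<Rightarrow> complex) set" where
  "trig_polys = {g. \<exists>S c. finite S \<and> (\<forall>ch\<in>S. is_character ch) \<and>
                        g = (\<lambda>x. \<Sum>ch\<in>S. c ch * ch x)}"

text \<open>A (bounded) operator T on l2(Z) is represented by its matrix
  A i j = <E_i, T E_j>.\<close>
type_synonym mat = "int \<Rightarrow> int \<Rightarrow> complex"

definition madd :: "mat \<Rightarrow> mat \<Rightarrow> mat" where
  "madd A B = (\<lambda>i j. A i j + B i j)"

definition msub :: "mat \<Rightarrow> mat \<Rightarrow> mat" where
  "msub A B = (\<lambda>i j. A i j - B i j)"

definition msmult :: "complex \<Rightarrow> mat \<Rightarrow> mat" where
  "msmult c A = (\<lambda>i j. c * A i j)"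

definition mmult :: "mat \<Rightarrow> mat \<Rightarrow> mat" where
  "mmult A B = (\<lambda>i j. infsum (\<lambda>k. A i k * B k j) UNIV)"

definition madj :: "mat \<Rightarrow> mat" where
  "madj A = (\<lambda>i j. cnj (A j i))"

definition mcomm :: "mat \<Rightarrow> mat \<Rightarrow> mat" where
  "mcomm Y A = msub (mmult Y A) (mmult A Y)"

definition opnorm_set :: "mat \<Rightarrow> real set" where
  "opnorm_set A = {cmod (\<Sum>i\<in>I. \<Sum>j\<in>J. cnj (y i) * A i j * x j) | I J x y.
      finite I \<and> finite J \<and> (\<Sum>j\<in>J. (cmod (x j))\<^sup>2) \<le> 1 \<and> (\<Sum>i\<in>I. (cmod (y i))\<^sup>2) \<le> 1}"

definition bounded_mat :: "mat \<Rightarrow> bool" where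
  "bounded_mat A \<longleftrightarrow> bdd_above (opnorm_set A)"

definition opnorm :: "mat \<Rightarrow> real" where
  "opnorm A = Sup (opnorm_set A)"

text \<open>The shift V E_l = E_(l+1), and its inverse.\<close>
definition Vop :: mat where
  "Vop = (\<lambda>i j. if i = j + 1 then 1 else 0)"

definition Vinv :: mat where
  "Vinv = (\<lambda>i j. if j = i + 1 then 1 else 0)"

text \<open>M_f E_l = f(x_l) E_l with x_l = l x_1.\<close>
definition Mop :: "'g::ab_group_add \<Rightarrow> ('g \<Rightarrow> complex) \<Rightarrow> mat" where
  "Mop x1 f = (\<lambda>i j. if i = j then f (intmul i x1) else 0)"

text \<open>exp(i theta L) E_l = exp(i theta l) E_l.\<close>
definition expL :: "real \<Rightarrow> mat" where
  "expL \<theta> = (\<lambda>i j. if i = j then exp (\<i> * complex_of_real \<theta> * of_int i) else 0)"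

inductive_set star_alg :: "mat set \<Rightarrow> mat set" for S :: "mat set" where
  gen: "A \<in> S \<Longrightarrow> A \<in> star_alg S"
| add: "A \<in> star_alg S \<Longrightarrow> B \<in> star_alg S \<Longrightarrow> madd A B \<in> star_alg S"
| smult: "A \<in> star_alg S \<Longrightarrow> msmult c A \<in> star_alg S"
| mult: "A \<in> star_alg S \<Longrightarrow> B \<in> star_alg S \<Longrightarrow> mmult A B \<in> star_alg S"
| adj: "A \<in> star_alg S \<Longrightarrow> madj A \<in> star_alg S"

definition cstar_alg :: "mat set \<Rightarrow> mat set" where
  "cstar_alg S = {A. bounded_mat A \<and> (\<exists>a. (\<forall>n. a n \<in> star_alg S) \<and>
                      (\<lambda>n. opnorm (msub (a n) A)) \<longlonglongrightarrow> 0)}"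

definition Balg :: "'g::{topological_group_add, ab_group_add} \<Rightarrow> mat set" where
  "Balg x1 = cstar_alg ({Vop} \<union> {Mop x1 f | f. continuous_on UNIV f})"

definition Bsmall :: "'g::{topological_group_add, ab_group_add} \<Rightarrow> mat set" where
  "Bsmall x1 = star_alg ({Vop, Vinv} \<union> {Mop x1 ch | ch. is_character ch})"

definition is_derivation :: "mat set \<Rightarrow> mat set \<Rightarrow> (mat \<Rightarrow> mat) \<Rightarrow> bool" where
  "is_derivation D E \<delta> \<longleftrightarrow>
     (\<forall>a\<in>D. \<delta> a \<in> E) \<and>
     (\<forall>a\<in>D. \<forall>b\<in>D. \<delta> (madd a b) = madd (\<delta> a) (\<delta> b)) \<and>
     (\<forall>c. \<forall>a\<in>D. \<delta> (msmult c a) = msmult c (\<delta> a)) \<and>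
     (\<forall>a\<in>D. \<forall>b\<in>D. \<delta> (mmult a b) = madd (mmult (\<delta> a) b) (mmult a (\<delta> b)))"

definition invariant_der :: "mat set \<Rightarrow> (mat \<Rightarrow> mat) \<Rightarrow> bool" where
  "invariant_der D \<delta> \<longleftrightarrow>
     (\<forall>\<theta>::real. \<forall>b\<in>D.
        mmult (mmult (expL (- \<theta>)) (\<delta> (mmult (mmult (expL \<theta>) b) (expL (- \<theta>))))) (expL \<theta>)
        = \<delta> b)"

definition approx_inner :: "mat set \<Rightarrow> mat set \<Rightarrow> (mat \<Rightarrow> mat) \<Rightarrow> bool" where
  "approx_inner D E \<delta> \<longleftrightarrow>
     (\<exists>y :: nat \<Rightarrow> mat. (\<forall>j. y j \<in> E) \<and>
        (\<forall>b\<in>D. (\<lambda>j. opnorm (msub (\<delta> b) (mcomm (y j) b))) \<longlonglongrightarrow> 0))"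

end

theory Submission
  imports Defs
begin

definition band :: "nat \<Rightarrow> mat \<Rightarrow> bool" where
  "band K A \<longleftrightarrow> (\<forall>i j. int K < \<bar>i - j\<bar> \<longrightarrow> A i j = 0)"
definition ebnd :: "real \<Rightarrow> mat \<Rightarrow> bool" where
  "ebnd C A \<longleftrightarrow> (\<forall>i j. cmod (A i j) \<le> C)"
definition nice :: "mat \<Rightarrow> bool" where
  "nice A \<longleftrightarrow> (\<exists>K C. band K A \<and> ebnd C A)"

lemma mmult_band_fin:
  assumes "band K A"
  shows "mmult A B i j = (\<Sum>k\<in>{i - int K..i + int K}. A i k * B k j)"
proof -
  have "infsum (\<lambda>k. A i k * B k j) UNIV = infsum (\<lambda>k. A i k * B k j) {i - int K..i + int K}"
    by (rule infsum_cong_neutral) (use assms in \<open>auto simp: band_def\<close>)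
  then show ?thesis by (simp add: mmult_def)
qed

lemma mmult_band_fin2:
  assumes "band K B"
  shows "mmult A B i j = (\<Sum>k\<in>{j - int K..j + int K}. A i k * B k j)"
proof -
  have "infsum (\<lambda>k. A i k * B k j) UNIV = infsum (\<lambda>k. A i k * B k j) {j - int K..j + int K}"
    by (rule infsum_cong_neutral) (use assms in \<open>auto simp: band_def\<close>)
  then show ?thesis by (simp add: mmult_def)
qed

lemma mmult_diagL:
  assumes "\<And>i j. i \<noteq> j \<Longrightarrow> D i j = 0"
  shows "mmult D B i j = D i i * B i j"
proof -
  have "infsum (\<lambda>k. D i k * B k j) UNIV = infsum (\<lambda>k. D i k * B k j) {i}"
    by (rule infsum_cong_neutral) (use assms in auto)
  then show ?thesis by (simp add: mmult_def)
qed

lemma mmult_diagR: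
  assumes "\<And>i j. i \<noteq> j \<Longrightarrow> D i j = 0"
  shows "mmult B D i j = B i j * D j j"
proof -
  have "infsum (\<lambda>k. B i k * D k j) UNIV = infsum (\<lambda>k. B i k * D k j) {j}"
    by (rule infsum_cong_neutral) (use assms in auto)
  then show ?thesis by (simp add: mmult_def)
qed

lemma Mop_multL: "mmult (Mop x1 g) B i j = g (intmul i x1) * B i j"
  by (subst mmult_diagL) (auto simp: Mop_def)
lemma Mop_multR: "mmult B (Mop x1 g) i j = B i j * g (intmul j x1)"
  by (subst mmult_diagR) (auto simp: Mop_def)
lemma expL_multL: "mmult (expL t) B i j = exp (\<i> * complex_of_real t * of_int i) * B i j"
  by (subst mmult_diagL) (auto simp: expL_def)
lemma expL_multR: "mmult B (expL t) i j = B i j * exp (\<i> * complex_of_real t * of_int j)"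
  by (subst mmult_diagR) (auto simp: expL_def)

lemma ebnd_nonneg: "ebnd C A \<Longrightarrow> 0 \<le> C"
  unfolding ebnd_def by (meson norm_ge_zero order_trans)

lemma band_mmult: "band K1 A \<Longrightarrow> band K2 B \<Longrightarrow> band (K1 + K2) (mmult A B)"
proof -
  assume a: "band K1 A" and b: "band K2 B"
  show ?thesis unfolding band_def
  proof (intro allI impI)
    fix i j assume ij: "int (K1 + K2) < \<bar>i - j\<bar>"
    have "\<And>k. A i k * B k j = 0"
    proof -
      fix k
      have "int K1 < \<bar>i - k\<bar> \<or> int K2 < \<bar>k - j\<bar>" using ij by linarith
      then show "A i k * B k j = 0" using a b by (auto simp: band_def)
    qed
    then have "(\<lambda>k. A i k * B k j) = (\<lambda>_. 0)" by auto
    then show "mmult A B i j = 0" by (simp add: mmult_def)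
  qed
qed

lemma ebnd_mmult:
  assumes "band K1 A" "ebnd C1 A" "ebnd C2 B"
  shows "ebnd (real (2 * K1 + 1) * (C1 * C2)) (mmult A B)"
  unfolding ebnd_def
proof (intro allI)
  fix i j
  have c1: "0 \<le> C1" using assms(2) by (rule ebnd_nonneg)
  have "cmod (mmult A B i j) = cmod (\<Sum>k\<in>{i - int K1..i + int K1}. A i k * B k j)"
    using assms(1) by (simp add: mmult_band_fin)
  also have "\<dots> \<le> (\<Sum>k\<in>{i - int K1..i + int K1}. cmod (A i k * B k j))" by (rule norm_sum)
  also have "\<dots> \<le> (\<Sum>k\<in>{i - int K1..i + int K1}. C1 * C2)"
    apply (rule sum_mono)
    using assms(2,3) c1 by (auto simp: ebnd_def norm_mult intro!: mult_mono)
  also have "\<dots> = real (2 * K1 + 1) * (C1 * C2)" by simp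
  finally show "cmod (mmult A B i j) \<le> real (2 * K1 + 1) * (C1 * C2)" .
qed

lemma nice_mmult: "nice A \<Longrightarrow> nice B \<Longrightarrow> nice (mmult A B)"
  unfolding nice_def using band_mmult ebnd_mmult by blast

lemma nice_madd: "nice A \<Longrightarrow> nice B \<Longrightarrow> nice (madd A B)"
proof -
  assume "nice A" "nice B"
  then obtain K1 C1 K2 C2 where "band K1 A" "ebnd C1 A" "band K2 B" "ebnd C2 B" by (auto simp: nice_def)
  then have "band (max K1 K2) (madd A B)" by (auto simp: band_def madd_def)
  moreover have "ebnd (C1 + C2) (madd A B)" unfolding ebnd_def madd_def
  proof (intro allI)
    fix i j
    have "cmod (A i j + B i j) \<le> cmod (A i j) + cmod (B i j)" by (rule norm_triangle_ineq)
    also have "\<dots> \<le> C1 + C2" using \<open>ebnd C1 A\<close> \<open>ebnd C2 B\<close> by (auto simp: ebnd_def intro: add_mono)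
    finally show "cmod (A i j + B i j) \<le> C1 + C2" .
  qed
  ultimately show ?thesis by (auto simp: nice_def)
qed

lemma nice_msmult: "nice A \<Longrightarrow> nice (msmult c A)"
proof -
  assume "nice A"
  then obtain K1 C1 where "band K1 A" "ebnd C1 A" by (auto simp: nice_def)
  then have "band K1 (msmult c A)" "ebnd (cmod c * C1) (msmult c A)"
    by (auto simp: band_def ebnd_def msmult_def norm_mult intro: mult_left_mono)
  then show ?thesis by (auto simp: nice_def)
qed

lemma nice_madj: "nice A \<Longrightarrow> nice (madj A)"
proof -
  assume "nice A"
  then obtain K1 C1 where "band K1 A" "ebnd C1 A" by (auto simp: nice_def)
  then have "band K1 (madj A)" "ebnd C1 (madj A)"
    by (auto simp: band_def ebnd_def madj_def abs_minus_commute)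
  then show ?thesis by (auto simp: nice_def)
qed

lemma nice_Vop: "nice Vop"
proof -
  have "band 1 Vop" "ebnd 1 Vop" by (auto simp: band_def ebnd_def Vop_def)
  then show ?thesis by (auto simp: nice_def)
qed

lemma nice_Vinv: "nice Vinv"
proof -
  have "band 1 Vinv" "ebnd 1 Vinv" by (auto simp: band_def ebnd_def Vinv_def)
  then show ?thesis by (auto simp: nice_def)
qed

lemma nice_Mop: "(\<And>x. cmod (g x) \<le> B) \<Longrightarrow> nice (Mop x1 g)"
proof -
  assume g: "\<And>x. cmod (g x) \<le> B"
  then have "0 \<le> B" by (meson norm_ge_zero order_trans)
  then have "band 0 (Mop x1 g)" "ebnd B (Mop x1 g)" by (auto simp: band_def ebnd_def Mop_def g)
  then show ?thesis by (auto simp: nice_def)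
qed

lemma card_near: "finite J \<Longrightarrow> card {j\<in>J. \<bar>i - j\<bar> \<le> int K} \<le> 2 * K + 1"
proof -
  have "{j\<in>J. \<bar>i - j\<bar> \<le> int K} \<subseteq> {i - int K..i + int K}" by auto
  then have "card {j\<in>J. \<bar>i - j\<bar> \<le> int K} \<le> card {i - int K..i + int K}"
    by (intro card_mono) auto
  also have "\<dots> = 2 * K + 1" by simp
  finally show ?thesis .
qed

lemma card_near2: "finite J \<Longrightarrow> card {j\<in>J. \<bar>j - i\<bar> \<le> int K} \<le> 2 * K + 1"
  using card_near[of J i K] by (simp add: abs_minus_commute)

lemma sum_near_bound:
  fixes a :: "int \<Rightarrow> real"
  assumes "finite I" "finite J" "\<And>i. 0 \<le> a i" "(\<Sum>i\<in>I. a i) \<le> 1"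
  shows "(\<Sum>i\<in>I. \<Sum>j\<in>J. if \<bar>i - j\<bar> \<le> int K then a i else 0) \<le> real (2 * K + 1)"
proof -
  have "(\<Sum>i\<in>I. \<Sum>j\<in>J. if \<bar>i - j\<bar> \<le> int K then a i else 0)
      = (\<Sum>i\<in>I. a i * real (card {j\<in>J. \<bar>i - j\<bar> \<le> int K}))"
    using assms(2) by (simp add: sum.If_cases mult.commute Int_def)
  also have "\<dots> \<le> (\<Sum>i\<in>I. a i * real (2 * K + 1))"
    apply (rule sum_mono) apply (rule mult_left_mono)
    using card_near[OF assms(2)] assms(3) by (auto simp del: of_nat_Suc)
  also have "\<dots> = (\<Sum>i\<in>I. a i) * real (2 * K + 1)" by (simp add: sum_distrib_right)
  also have "\<dots> \<le> 1 * real (2 * K + 1)" by (rule mult_right_mono) (use assms(4) in auto)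
  finally show ?thesis by simp
qed

lemma opnorm_set_bound:
  assumes "band K A" "ebnd C A" "v \<in> opnorm_set A"
  shows "v \<le> real (2 * K + 1) * C"
proof -
  have C0: "0 \<le> C" using assms(2) by (rule ebnd_nonneg)
  obtain I J x y where v: "v = cmod (\<Sum>i\<in>I. \<Sum>j\<in>J. cnj (y i) * A i j * x j)"
    and fin: "finite I" "finite J" and xs: "(\<Sum>j\<in>J. (cmod (x j))\<^sup>2) \<le> 1"
    and ys: "(\<Sum>i\<in>I. (cmod (y i))\<^sup>2) \<le> 1"
    using assms(3) unfolding opnorm_set_def by blast
  have pt: "cmod (cnj (y i) * A i j * x j) \<le>
      C / 2 * ((if \<bar>i - j\<bar> \<le> int K then (cmod (y i))\<^sup>2 else 0) +
               (if \<bar>j - i\<bar> \<le> int K then (cmod (x j))\<^sup>2 else 0))" for i j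
  proof (cases "\<bar>i - j\<bar> \<le> int K")
    case True
    have "cmod (cnj (y i) * A i j * x j) = cmod (A i j) * (cmod (y i) * cmod (x j))"
      by (simp add: norm_mult)
    also have "\<dots> \<le> C * (cmod (y i) * cmod (x j))"
      using assms(2) by (intro mult_right_mono) (auto simp: ebnd_def)
    also have "\<dots> \<le> C * (((cmod (y i))\<^sup>2 + (cmod (x j))\<^sup>2) / 2)"
    proof (rule mult_left_mono[OF _ C0])
      have "0 \<le> (cmod (y i) - cmod (x j))\<^sup>2" by simp
      then show "cmod (y i) * cmod (x j) \<le> ((cmod (y i))\<^sup>2 + (cmod (x j))\<^sup>2) / 2"
        by (simp add: power2_diff)
    qed
    finally show ?thesis using True by (simp add: abs_minus_commute)
  next
    case False
    then have "A i j = 0" using assms(1) by (auto simp: band_def)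
    then show ?thesis using False by (simp add: abs_minus_commute)
  qed
  have "v \<le> (\<Sum>i\<in>I. \<Sum>j\<in>J. cmod (cnj (y i) * A i j * x j))"
    unfolding v by (rule order_trans[OF norm_sum sum_mono[OF norm_sum]])
  also have "\<dots> \<le> (\<Sum>i\<in>I. \<Sum>j\<in>J. C / 2 * ((if \<bar>i - j\<bar> \<le> int K then (cmod (y i))\<^sup>2 else 0) +
               (if \<bar>j - i\<bar> \<le> int K then (cmod (x j))\<^sup>2 else 0)))"
    by (intro sum_mono pt)
  also have "\<dots> = C / 2 * ((\<Sum>i\<in>I. \<Sum>j\<in>J. if \<bar>i - j\<bar> \<le> int K then (cmod (y i))\<^sup>2 else 0) +
       (\<Sum>j\<in>J. \<Sum>i\<in>I. if \<bar>j - i\<bar> \<le> int K then (cmod (x j))\<^sup>2 else 0))"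
    by (simp add: sum_distrib_left sum.distrib sum.swap[of _ J I] distrib_left)
  also have "\<dots> \<le> C / 2 * (real (2 * K + 1) + real (2 * K + 1))"
    by (intro mult_left_mono add_mono sum_near_bound) (use fin xs ys C0 in auto)
  also have "\<dots> = real (2 * K + 1) * C" by simp
  finally show ?thesis .
qed

lemma opnorm_set_0: "0 \<in> opnorm_set A"
  unfolding opnorm_set_def
  by (rule CollectI, rule exI[of _ "{}"], rule exI[of _ "{}"], rule exI[of _ "\<lambda>_. 0"], rule exI[of _ "\<lambda>_. 0"]) simp

lemma nice_bounded: "band K A \<Longrightarrow> ebnd C A \<Longrightarrow> bounded_mat A"
  unfolding bounded_mat_def bdd_above_def using opnorm_set_bound by blast

lemma nice_bounded': "nice A \<Longrightarrow> bounded_mat A"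
  unfolding nice_def using nice_bounded by blast

lemma opnorm_le: "band K A \<Longrightarrow> ebnd C A \<Longrightarrow> opnorm A \<le> real (2 * K + 1) * C"
  unfolding opnorm_def using opnorm_set_bound opnorm_set_0
  by (intro cSup_least) blast+

lemma opnorm_ge0: "bounded_mat A \<Longrightarrow> 0 \<le> opnorm A"
  unfolding opnorm_def bounded_mat_def using opnorm_set_0 by (rule cSup_upper2) auto

lemma opnorm_zero: "opnorm (\<lambda>i j. 0) = 0"
proof -
  have "band 0 (\<lambda>i j. 0)" "ebnd 0 (\<lambda>i j. 0)" by (auto simp: band_def ebnd_def)
  then have "opnorm (\<lambda>i j. 0) \<le> 0" using opnorm_le[of 0 "\<lambda>i j. 0" 0] by simp
  moreover have "0 \<le> opnorm (\<lambda>i j. 0)" using opnorm_ge0 nice_bounded \<open>band 0 _\<close> \<open>ebnd 0 _\<close> by blast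
  ultimately show ?thesis by simp
qed

lemma intmul_nat: "intmul (int k) x = (\<Sum>_\<in>{..<k}. x)"
  by (simp add: intmul_def)

lemma intmul_0[simp]: "intmul 0 x = 0"
  by (simp add: intmul_def)

lemma intmul_succ: "intmul (n + 1) x = intmul n x + x"
proof (cases "0 \<le> n")
  case True
  define k where "k = nat n"
  have k: "n = int k" using True by (simp add: k_def)
  have "n + 1 = int (Suc k)" using k by simp
  then show ?thesis using k by (simp only: intmul_nat sum.lessThan_Suc)
next
  case False
  define k where "k = nat (- n - 1)"
  have k: "n = - int (Suc k)" using False by (simp add: k_def)
  show ?thesis
  proof (cases k)
    case 0 then show ?thesis using k by (simp add: intmul_def)
  next
    case (Suc m)
    have e1: "n + 1 = - int (Suc m)" using k Suc by simp
    have a1: "nat (- n) = Suc k" using k by simp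
    have a2: "nat (- (n + 1)) = k" using e1 Suc by simp
    have "intmul n x = - (\<Sum>_\<in>{..<nat (- n)}. x)" using False by (simp add: intmul_def)
    then have "intmul n x = - (\<Sum>_\<in>{..<Suc k}. x)" by (simp only: a1)
    moreover have "intmul (n+1) x = - (\<Sum>_\<in>{..<nat (- (n + 1))}. x)" using e1 by (simp add: intmul_def)
    then have "intmul (n+1) x = - (\<Sum>_\<in>{..<k}. x)" by (simp only: a2)
    ultimately show ?thesis by simp
  qed
qed

definition Fs :: "(int \<Rightarrow> complex) \<Rightarrow> int \<Rightarrow> complex" where
  "Fs c n = (if 0 \<le> n then (\<Sum>k\<in>{0..<n}. c k) else - (\<Sum>k\<in>{n..<0}. c k))"

lemma Fs_step: "Fs c (n + 1) - Fs c n = c n"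
proof (cases "0 \<le> n")
  case True
  have "{0..<n+1} = insert n {0..<n}" using True by auto
  then show ?thesis using True by (simp add: Fs_def)
next
  case False
  have "{n..<0} = insert n {n+1..<0}" using False by auto
  then show ?thesis using False by (auto simp: Fs_def)
qed

lemma lip_nat:
  fixes G :: "int \<Rightarrow> complex" and j :: int and e :: real
  assumes "\<And>n. cmod (G (n + 1) - G n) \<le> e"
  shows "cmod (G (j + int m) - G j) \<le> real m * e"
proof (induction m)
  case 0 then show ?case by simp
next
  case (Suc m)
  have "cmod (G (j + int (Suc m)) - G j) \<le> cmod (G (j + int m + 1) - G (j + int m)) + cmod (G (j + int m) - G j)"
    using norm_triangle_ineq[of "G (j + int m + 1) - G (j + int m)" "G (j + int m) - G j"]
    by (simp add: ac_simps)
  also have "\<dots> \<le> e + real m * e" using assms Suc by (intro add_mono) auto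
  finally show ?case by (simp add: algebra_simps)
qed

lemma lipG:
  fixes G :: "int \<Rightarrow> complex" and i j :: int and e :: real
  assumes "\<And>n. cmod (G (n + 1) - G n) \<le> e"
  shows "cmod (G i - G j) \<le> \<bar>i - j\<bar> * e"
proof (cases "j \<le> i")
  case True
  then obtain m where "i = j + int m" by (metis le_iff_add nat_le_iff_add zle_iff_zadd)
  then show ?thesis using lip_nat[where G=G and e=e, OF assms, of j m] by simp
next
  case False
  then obtain m where m: "j = i + int m" by (metis le_iff_add nat_le_iff_add not_le less_le zle_iff_zadd)
  have "cmod (G i - G j) = cmod (G j - G i)" by (rule norm_minus_commute)
  then show ?thesis using lip_nat[where G=G and e=e, OF assms, of i m] m by simp
qed

definition der :: "(int \<Rightarrow> complex) \<Rightarrow> mat \<Rightarrow> mat" where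
  "der c b = (\<lambda>i j. (Fs c i - Fs c j) * b i j)"

lemma band_der: "band K b \<Longrightarrow> band K (der c b)"
  by (auto simp: band_def der_def)

lemma ebnd_der:
  assumes "\<And>n. cmod (c n) \<le> B" "band K b" "ebnd C b"
  shows "ebnd (real K * B * C) (der c b)"
  unfolding ebnd_def
proof (intro allI)
  fix i j
  show "cmod (der c b i j) \<le> real K * B * C"
  proof (cases "\<bar>i - j\<bar> \<le> int K")
    case True
    have "cmod (Fs c i - Fs c j) \<le> \<bar>i - j\<bar> * B" using lipG[where G="Fs c" and e=B] assms(1) Fs_step by metis
    also have "\<dots> \<le> real K * B" using True assms(1)
      by (metis mult_right_mono norm_ge_zero of_int_le_iff of_int_of_nat_eq order_trans)
    finally have 1: "cmod (Fs c i - Fs c j) \<le> real K * B" .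
    have B0: "0 \<le> B" using assms(1)[of 0] by (meson norm_ge_zero order_trans)
    have "cmod (der c b i j) = cmod (Fs c i - Fs c j) * cmod (b i j)" by (simp add: der_def norm_mult)
    also have "\<dots> \<le> real K * B * C" using 1 assms(3) B0
      by (intro mult_mono) (auto simp: ebnd_def)
    finally show ?thesis .
  next
    case False
    then have "b i j = 0" using assms(2) by (auto simp: band_def)
    have B0: "0 \<le> B" using assms(1)[of 0] by (meson norm_ge_zero order_trans)
    have "0 \<le> real K * B * C" using B0 ebnd_nonneg[OF assms(3)] by simp
    then show ?thesis using \<open>b i j = 0\<close> by (simp add: der_def)
  qed
qed

lemma nice_der: "(\<And>n. cmod (c n) \<le> B) \<Longrightarrow> nice b \<Longrightarrow> nice (der c b)"
  unfolding nice_def using band_der ebnd_der by blast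

lemma der_madd: "der c (madd a b) = madd (der c a) (der c b)"
  by (auto simp: der_def madd_def fun_eq_iff algebra_simps)

lemma der_msmult: "der c (msmult z a) = msmult z (der c a)"
  by (auto simp: der_def msmult_def fun_eq_iff algebra_simps)

lemma der_mmult:
  assumes "band K a"
  shows "der c (mmult a b) = madd (mmult (der c a) b) (mmult a (der c b))"
proof (intro ext)
  fix i j
  have da: "band K (der c a)" using assms by (rule band_der)
  show "der c (mmult a b) i j = madd (mmult (der c a) b) (mmult a (der c b)) i j"
  proof -
    have "der c (mmult a b) i j = (Fs c i - Fs c j) * mmult a b i j" by (simp add: der_def)
    also have "\<dots> = (Fs c i - Fs c j) * (\<Sum>k\<in>{i - int K..i + int K}. a i k * b k j)"
      by (simp add: mmult_band_fin[OF assms])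
    also have "\<dots> = (\<Sum>k\<in>{i - int K..i + int K}. der c a i k * b k j) + (\<Sum>k\<in>{i - int K..i + int K}. a i k * der c b k j)"
      by (simp add: der_def sum_distrib_left sum.distrib[symmetric] algebra_simps)
    also have "\<dots> = madd (mmult (der c a) b) (mmult a (der c b)) i j"
      by (simp add: madd_def mmult_band_fin[OF assms] mmult_band_fin[OF da])
    finally show ?thesis .
  qed
qed

lemma der_Vop: "der (\<lambda>n. f (intmul n x1)) Vop = mmult Vop (Mop x1 f)"
proof (intro ext)
  fix i j
  show "der (\<lambda>n. f (intmul n x1)) Vop i j = mmult Vop (Mop x1 f) i j"
    unfolding Mop_multR using Fs_step[of "\<lambda>n. f (intmul n x1)" j]
    by (auto simp: der_def Vop_def)
qed

lemma der_Vinv: "der (\<lambda>n. f (intmul n x1)) Vinv = msmult (-1) (mmult (Mop x1 f) Vinv)"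
proof (intro ext)
  fix i j
  show "der (\<lambda>n. f (intmul n x1)) Vinv i j = msmult (-1) (mmult (Mop x1 f) Vinv) i j"
    unfolding msmult_def Mop_multL using Fs_step[of "\<lambda>n. f (intmul n x1)" i]
    by (auto simp: der_def Vinv_def algebra_simps)
qed

lemma der_Mop: "der c (Mop x1 g) = (\<lambda>i j. 0)"
  by (auto simp: der_def Mop_def fun_eq_iff)

lemma der_inv:
  "mmult (mmult (expL (- t)) (der c (mmult (mmult (expL t) b) (expL (- t))))) (expL t) = der c b"
proof (intro ext)
  fix i j
  have e: "exp (\<i> * complex_of_real (- t) * of_int k) * exp (\<i> * complex_of_real t * of_int k) = 1" for k
    by (simp flip: exp_add)
  have e2: "exp (\<i> * complex_of_real t * of_int k) * exp (\<i> * complex_of_real (- t) * of_int k) = 1" for k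
    by (simp flip: exp_add)
  show "mmult (mmult (expL (- t)) (der c (mmult (mmult (expL t) b) (expL (- t))))) (expL t) i j = der c b i j"
    unfolding expL_multR expL_multL
    apply (simp add: der_def expL_multR expL_multL)
    using e[of i] e2[of j] by (simp add: algebra_simps)
qed

lemma approx_entry:
  assumes "\<And>x. cmod (f x - (h (x + x1) - h x)) \<le> e" "band K b" "ebnd C b"
  shows "ebnd (real K * e * C) (msub (der (\<lambda>n. f (intmul n x1)) b) (mcomm (Mop x1 h) b))"
proof -
  let ?G = "\<lambda>n. Fs (\<lambda>n. f (intmul n x1)) n - h (intmul n x1)"
  have st: "cmod (?G (n + 1) - ?G n) \<le> e" for n
  proof -
    have "?G (n + 1) - ?G n = (Fs (\<lambda>n. f (intmul n x1)) (n + 1) - Fs (\<lambda>n. f (intmul n x1)) n) - (h (intmul (n+1) x1) - h (intmul n x1))"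
      by (simp only: diff_diff_eq diff_add_eq add_diff_eq diff_diff_eq2 algebra_simps)
    also have "\<dots> = f (intmul n x1) - (h (intmul n x1 + x1) - h (intmul n x1))"
      by (simp only: Fs_step intmul_succ)
    finally have eq: "?G (n + 1) - ?G n = f (intmul n x1) - (h (intmul n x1 + x1) - h (intmul n x1))" .
    show ?thesis unfolding eq by (rule assms(1))
  qed
  have ent: "msub (der (\<lambda>n. f (intmul n x1)) b) (mcomm (Mop x1 h) b) i j = (?G i - ?G j) * b i j" for i j
    by (simp add: msub_def mcomm_def Mop_multL Mop_multR der_def algebra_simps)
  show ?thesis unfolding ebnd_def ent
  proof (intro allI)
    fix i j
    show "cmod ((?G i - ?G j) * b i j) \<le> real K * e * C"
    proof (cases "\<bar>i - j\<bar> \<le> int K")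
      case True
      have "cmod (?G i - ?G j) \<le> \<bar>i - j\<bar> * e" using lipG[where G="?G" and e=e] st by blast
      also have "\<dots> \<le> real K * e" using True st[of 0]
        by (metis mult_right_mono norm_ge_zero of_int_le_iff of_int_of_nat_eq order_trans)
      finally have 1: "cmod (?G i - ?G j) \<le> real K * e" .
      have e0: "0 \<le> e" using st[of 0] by (meson norm_ge_zero order_trans)
      show ?thesis unfolding norm_mult using 1 assms(3) e0
        by (intro mult_mono) (auto simp: ebnd_def)
    next
      case False
      then have "b i j = 0" using assms(2) by (auto simp: band_def)
      have e0: "0 \<le> e" using st[of 0] by (meson norm_ge_zero order_trans)
      have "0 \<le> real K * e * C" using e0 ebnd_nonneg[OF assms(3)] by simp
      then show ?thesis using \<open>b i j = 0\<close> by simp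
    qed
  qed
qed

lemma open_pre: "continuous_on UNIV g \<Longrightarrow> open B \<Longrightarrow> open (g -` B)"
  using continuous_on_open_vimage[of UNIV g] by auto

lemma cont_transl:
  fixes f :: "'g::{topological_group_add, ab_group_add} \<Rightarrow> complex"
  assumes "continuous_on UNIV f"
  shows "continuous_on UNIV (\<lambda>x. f (x + c))"
  by (rule continuous_on_compose2[OF assms]) (auto intro!: continuous_intros)

lemma unif_cont:
  fixes f :: "'g::{topological_group_add, ab_group_add, t2_space} \<Rightarrow> complex"
  assumes cpt: "compact (UNIV :: 'g set)" and f: "continuous_on UNIV f" and e: "e > 0"
  shows "\<exists>U. open U \<and> 0 \<in> U \<and> (\<forall>x. \<forall>u\<in>U. cmod (f (x + u) - f x) < e)"
proof -
  define W where "W x = (\<lambda>w. f (w + x)) -` ball (f x) (e / 2)" for x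
  have Wo: "open (W x)" for x
    unfolding W_def by (rule open_pre[OF cont_transl[OF f]]) simp
  have W0: "0 \<in> W x" for x using e by (simp add: W_def)
  have "\<exists>V. open V \<and> 0 \<in> V \<and> (\<forall>a\<in>V. \<forall>b\<in>V. a + b \<in> W x)" for x
  proof -
    have "open ((\<lambda>p::'g\<times>'g. fst p + snd p) -` W x)"
      by (rule open_pre[OF _ Wo]) (auto intro!: continuous_intros)
    moreover have "(0, 0) \<in> (\<lambda>p::'g\<times>'g. fst p + snd p) -` W x" using W0 by simp
    ultimately obtain A B where AB: "open A" "open B" "(0,0) \<in> A \<times> B"
      "A \<times> B \<subseteq> (\<lambda>p::'g\<times>'g. fst p + snd p) -` W x"
      by (rule open_prod_elim)
    show ?thesis
      by (rule exI[of _ "A \<inter> B"]) (use AB in auto)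
  qed
  then obtain V where V: "\<And>x. open (V x)" "\<And>x. 0 \<in> V x" "\<And>x a b. a \<in> V x \<Longrightarrow> b \<in> V x \<Longrightarrow> a + b \<in> W x"
    by metis
  have VW: "a \<in> V x \<Longrightarrow> a \<in> W x" for a x using V(3)[of a x 0] V(2)[of x] by simp
  define Ob where "Ob x = (\<lambda>y. y - x) -` V x" for x
  have Oo: "open (Ob x)" for x unfolding Ob_def by (rule open_pre[OF _ V(1)]) (auto intro!: continuous_intros)
  have cov: "UNIV \<subseteq> (\<Union>x\<in>UNIV. Ob x)"
  proof
    fix y :: 'g
    show "y \<in> (\<Union>x\<in>UNIV. Ob x)" by (rule UN_I[of y]) (simp_all add: Ob_def V(2))
  qed
  have Oo': "\<And>T. T \<in> UNIV \<Longrightarrow> open (Ob T)" using Oo by simp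
  obtain C where C0: "C \<subseteq> UNIV" and C: "finite C" "UNIV \<subseteq> (\<Union>x\<in>C. Ob x)"
    by (rule compactE_image[OF cpt Oo' cov])
  define U where "U = (\<Inter>x\<in>C. V x)"
  have "open U" unfolding U_def using C(1) V(1) by (intro open_INT) auto
  moreover have "0 \<in> U" unfolding U_def using V(2) by auto
  moreover have "\<forall>x. \<forall>u\<in>U. cmod (f (x + u) - f x) < e"
  proof (intro allI ballI)
    fix x u assume u: "u \<in> U"
    obtain y where y: "y \<in> C" "x \<in> Ob y" using C(2) by blast
    have xy: "x - y \<in> V y" using y(2) by (simp add: Ob_def)
    have uy: "u \<in> V y" using u y(1) by (simp add: U_def)
    have "x - y + u \<in> W y" using V(3)[OF xy uy] .
    then have 1: "cmod (f (x + u) - f y) < e / 2" by (simp add: W_def algebra_simps dist_norm norm_minus_commute)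
    have "x - y \<in> W y" using VW[OF xy] .
    then have 2: "cmod (f x - f y) < e / 2" by (simp add: W_def algebra_simps dist_norm norm_minus_commute)
    have "cmod (f (x + u) - f x) \<le> cmod (f (x + u) - f y) + cmod (f x - f y)"
      using norm_triangle_ineq4[of "f (x + u) - f y" "f x - f y"] by simp
    then show "cmod (f (x + u) - f x) < e" using 1 2 by linarith
  qed
  ultimately show ?thesis by blast
qed

lemma cont_bounded:
  fixes f :: "'g::{topological_group_add, ab_group_add, t2_space} \<Rightarrow> complex"
  assumes cpt: "compact (UNIV :: 'g set)" and f: "continuous_on UNIV f"
  shows "\<exists>B. \<forall>x. cmod (f x) \<le> B"
proof -
  have "compact (f ` UNIV)" by (rule compact_continuous_image[OF f cpt])
  then have "bounded (range f)" by (rule compact_imp_bounded)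
  then show ?thesis by (auto simp: bounded_iff)
qed

lemma haar_space: "haar_prob \<mu> \<Longrightarrow> space \<mu> = UNIV"
  unfolding haar_prob_def using sets_eq_imp_space_eq[of \<mu> borel] by auto

lemma haar_meas:
  fixes g :: "'g::{topological_group_add, ab_group_add, t2_space} \<Rightarrow> 'b::topological_space"
  assumes "haar_prob \<mu>" "continuous_on UNIV g"
  shows "g \<in> borel_measurable \<mu>"
proof -
  have "sets \<mu> = sets borel" using assms(1) by (simp add: haar_prob_def)
  then have "measurable \<mu> (borel :: 'b measure) = measurable borel borel"
    by (intro measurable_cong_sets) simp_all
  then show ?thesis using borel_measurable_continuous_onI[OF assms(2)] by simp
qed

lemma cont_integrable:
  fixes g :: "'g::{topological_group_add, ab_group_add, t2_space} \<Rightarrow> complex"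
  assumes cpt: "compact (UNIV :: 'g set)" and h: "haar_prob \<mu>" and g: "continuous_on UNIV g"
  shows "integrable \<mu> g"
proof -
  interpret prob_space \<mu> using h by (simp add: haar_prob_def)
  obtain B where B: "\<And>x. cmod (g x) \<le> B" using cont_bounded[OF cpt g] by blast
  show ?thesis
    by (rule integrable_const_bound[where B=B]) (use B haar_meas[OF h g] in auto)
qed

lemma haar_translate:
  fixes g :: "'g::{topological_group_add, ab_group_add, t2_space} \<Rightarrow> complex"
  assumes h: "haar_prob \<mu>" and g: "continuous_on UNIV g"
  shows "integral\<^sup>L \<mu> (\<lambda>x. g (x + c)) = integral\<^sup>L \<mu> g"
proof -
  have sets: "sets \<mu> = sets borel" using h by (simp add: haar_prob_def)
  have sp: "space \<mu> = UNIV" using haar_space[OF h] .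
  have inv: "\<forall>a. \<forall>A\<in>sets \<mu>. emeasure \<mu> ((\<lambda>x. a + x) ` A) = emeasure \<mu> A"
    using h by (simp add: haar_prob_def)
  have tm: "(\<lambda>x::'g. x + c) \<in> measurable \<mu> \<mu>"
  proof -
    have "(\<lambda>x::'g. x + c) \<in> measurable borel borel"
      by (rule borel_measurable_continuous_onI) (auto intro!: continuous_intros)
    moreover have "measurable \<mu> \<mu> = measurable (borel :: 'g measure) borel"
      by (intro measurable_cong_sets) (simp_all add: sets)
    ultimately show ?thesis by simp
  qed
  have "distr \<mu> \<mu> (\<lambda>x. x + c) = \<mu>"
  proof (rule measure_eqI)
    show "sets (distr \<mu> \<mu> (\<lambda>x. x + c)) = sets \<mu>" by simp
    fix A assume A: "A \<in> sets (distr \<mu> \<mu> (\<lambda>x. x + c))"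
    then have A': "A \<in> sets \<mu>" by simp
    have seteq: "(\<lambda>x. x + c) -` A \<inter> space \<mu> = (\<lambda>x. (- c) + x) ` A"
      unfolding sp
    proof (intro equalityI subsetI)
      fix x assume "x \<in> (\<lambda>x. x + c) -` A \<inter> UNIV"
      then have "x + c \<in> A" by simp
      then show "x \<in> (\<lambda>x. (- c) + x) ` A" by (rule rev_image_eqI) simp
    next
      fix x assume "x \<in> (\<lambda>x. (- c) + x) ` A"
      then obtain a where "a \<in> A" "x = - c + a" by blast
      then show "x \<in> (\<lambda>x. x + c) -` A \<inter> UNIV" by simp
    qed
    have e1: "emeasure (distr \<mu> \<mu> (\<lambda>x. x + c)) A = emeasure \<mu> ((\<lambda>x. (- c) + x) ` A)"
      using emeasure_distr[OF tm A'] seteq by simp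
    have e2: "emeasure \<mu> ((\<lambda>x. (- c) + x) ` A) = emeasure \<mu> A" using inv A' by blast
    show "emeasure (distr \<mu> \<mu> (\<lambda>x. x + c)) A = emeasure \<mu> A" using e1 e2 by (rule trans)
  qed
  then have "integral\<^sup>L \<mu> g = integral\<^sup>L (distr \<mu> \<mu> (\<lambda>x. x + c)) g" by simp
  also have "\<dots> = integral\<^sup>L \<mu> (\<lambda>x. g (x + c))"
    by (rule integral_distr[OF tm haar_meas[OF h g]])
  finally show ?thesis by simp
qed

lemma shift_c: "x + x1 + intmul (int k) x1 = x + intmul (int (Suc k)) x1"
  using intmul_succ[of "int k" x1] by (simp add: algebra_simps)

lemma tele_sum:
  fixes f :: "'g::ab_group_add \<Rightarrow> complex"
  shows "(\<Sum>m<k. f (x + x1 + intmul (int m) x1)) - (\<Sum>m<k. f (x + intmul (int m) x1))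
     = f (x + intmul (int k) x1) - f x"
proof -
  have "(\<Sum>m<k. f (x + x1 + intmul (int m) x1)) - (\<Sum>m<k. f (x + intmul (int m) x1))
      = (\<Sum>m<k. f (x + intmul (int (Suc m)) x1) - f (x + intmul (int m) x1))"
    by (simp add: shift_c sum_subtractf)
  also have "\<dots> = f (x + intmul (int k) x1) - f (x + intmul (int 0) x1)"
    by (rule sum_lessThan_telescope)
  finally show ?thesis by simp
qed

lemma cobound:
  fixes f :: "'g::{topological_group_add, ab_group_add, t2_space} \<Rightarrow> complex"
  assumes cpt: "compact (UNIV :: 'g set)" and hp: "haar_prob \<mu>"
    and dense: "closure (range (\<lambda>n::int. intmul n x1)) = UNIV"
    and f: "continuous_on UNIV f" and f0: "integral\<^sup>L \<mu> f = 0" and e: "e > 0"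
  shows "\<exists>h. continuous_on UNIV h \<and> (\<forall>x. cmod (f x - (h (x + x1) - h x)) \<le> e)"
proof -
  interpret prob_space \<mu> using hp by (simp add: haar_prob_def)
  obtain B where B: "\<And>x. cmod (f x) \<le> B" using cont_bounded[OF cpt f] by blast
  have B0: "0 \<le> B" using B[of 0] by (meson norm_ge_zero order_trans)
  obtain U where U: "open U" "0 \<in> U" "\<And>x u. u \<in> U \<Longrightarrow> cmod (f (x + u) - f x) < e / 2"
    using unif_cont[OF cpt f, of "e/2"] e by auto
  define P where "P n = (\<lambda>d. d - intmul n x1) -` U" for n
  have Po: "open (P n)" for n unfolding P_def by (rule open_pre[OF _ U(1)]) (auto intro!: continuous_intros)
  have cov: "UNIV \<subseteq> (\<Union>n\<in>UNIV. P n)"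
  proof
    fix d :: 'g
    define Od where "Od = (\<lambda>z. d - z) -` U"
    have "open Od" unfolding Od_def by (rule open_pre[OF _ U(1)]) (auto intro!: continuous_intros)
    moreover have "d \<in> Od" using U(2) by (simp add: Od_def)
    ultimately have "Od \<inter> range (\<lambda>n::int. intmul n x1) \<noteq> {}"
      using open_Int_closure_eq_empty[of Od "range (\<lambda>n::int. intmul n x1)"] dense by auto
    then show "d \<in> (\<Union>n\<in>UNIV. P n)" by (auto simp: Od_def P_def)
  qed
  have Po': "\<And>T. T \<in> UNIV \<Longrightarrow> open (P T)" using Po by simp
  obtain N0 where N00: "N0 \<subseteq> UNIV" and N0: "finite N0" "UNIV \<subseteq> (\<Union>n\<in>N0. P n)"
    by (rule compactE_image[OF cpt Po' cov])
  define K where "K = Max (insert 0 ((\<lambda>n. real_of_int \<bar>n\<bar>) ` N0))"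
  have K0: "0 \<le> K" unfolding K_def using N0(1) by (intro Max_ge) auto
  have cov2: "\<exists>n. \<bar>n\<bar> \<le> K \<and> d - intmul n x1 \<in> U" for d
  proof -
    obtain n where n: "n \<in> N0" "d \<in> P n" using N0(2) by blast
    have "real_of_int \<bar>n\<bar> \<le> K" unfolding K_def using N0(1) n(1) by (intro Max_ge) auto
    then show ?thesis using n(2) by (auto simp: P_def)
  qed
  obtain N0' :: nat where N0': "4 * K * B / e < real N0'" using reals_Archimedean2 by blast
  define N where "N = Suc N0'"
  have N1: "1 \<le> N" by (simp add: N_def)
  have Npos: "0 < real N" using N1 by simp
  have KBN: "K * (2 * B / real N) \<le> e / 2"
  proof -
    have "4 * K * B / e < real N" using N0' by (simp add: N_def)
    then have "4 * K * B < real N * e" using e by (simp add: field_simps)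
    then show ?thesis using Npos e by (simp add: field_simps)
  qed
  define A where "A x = (\<Sum>k<N. f (x + intmul (int k) x1)) / of_nat N" for x
  have Acont: "continuous_on UNIV A"
    unfolding A_def using N1 by (intro continuous_intros cont_transl[OF f]) simp
  have step: "cmod (A (x + x1) - A x) \<le> 2 * B / real N" for x
  proof -
    have "A (x + x1) - A x = (f (x + intmul (int N) x1) - f x) / of_nat N"
      unfolding A_def using tele_sum[of f x x1 N] by (simp add: diff_divide_distrib[symmetric])
    also have "cmod \<dots> = cmod (f (x + intmul (int N) x1) - f x) / real N"
      by (simp add: norm_divide)
    also have "\<dots> \<le> (B + B) / real N"
      using norm_triangle_ineq4[of "f (x + intmul (int N) x1)" "f x"] B[of x] B[of "x + intmul (int N) x1"] Npos
      by (intro divide_right_mono) auto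
    finally show ?thesis by simp
  qed
  have shift: "cmod (A (x + intmul n x1) - A x) \<le> \<bar>n\<bar> * (2 * B / real N)" for x n
  proof -
    have st: "cmod (A (x + intmul (m + 1) x1) - A (x + intmul m x1)) \<le> 2 * B / real N" for m
      using step[of "x + intmul m x1"] by (simp add: intmul_succ add.assoc)
    show ?thesis using lipG[where G="\<lambda>m. A (x + intmul m x1)" and e="2 * B / real N", OF st, of n 0]
      by simp
  qed
  have pert: "cmod (A (z + u) - A z) \<le> e / 2" if u: "u \<in> U" for z u
  proof -
    have "A (z + u) - A z = (\<Sum>k<N. f ((z + intmul (int k) x1) + u) - f (z + intmul (int k) x1)) / of_nat N"
      unfolding A_def by (simp add: diff_divide_distrib[symmetric] sum_subtractf algebra_simps)
    also have "cmod \<dots> = cmod (\<Sum>k<N. f ((z + intmul (int k) x1) + u) - f (z + intmul (int k) x1)) / real N"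
      by (simp add: norm_divide)
    also have "\<dots> \<le> (\<Sum>k<N. cmod (f ((z + intmul (int k) x1) + u) - f (z + intmul (int k) x1))) / real N"
      by (intro divide_right_mono norm_sum) simp
    also have "\<dots> \<le> (\<Sum>k<N. e / 2) / real N"
      by (intro divide_right_mono sum_mono less_imp_le U(3) u) (use N1 in simp)
    also have "\<dots> = e / 2" using N1 by simp
    finally show ?thesis .
  qed
  have osc: "cmod (A y - A x) \<le> e" for x y
  proof -
    obtain n where n: "\<bar>n\<bar> \<le> K" "y - x - intmul n x1 \<in> U" using cov2[of "y - x"] by blast
    define u where "u = y - x - intmul n x1"
    have yeq: "y = (x + intmul n x1) + u" by (simp add: u_def)
    have "cmod (A y - A x) \<le> cmod (A y - A (x + intmul n x1)) + cmod (A (x + intmul n x1) - A x)"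
      using norm_triangle_ineq[of "A y - A (x + intmul n x1)" "A (x + intmul n x1) - A x"] by simp
    also have "\<dots> \<le> e / 2 + \<bar>n\<bar> * (2 * B / real N)"
      using pert[of u "x + intmul n x1"] n(2) shift[of x n] unfolding yeq u_def[symmetric]
      by (intro add_mono) auto
    also have "\<dots> \<le> e / 2 + K * (2 * B / real N)"
      using n(1) B0 Npos by (intro add_left_mono mult_right_mono) auto
    also have "\<dots> \<le> e" using KBN by simp
    finally show ?thesis .
  qed
  have intA: "integral\<^sup>L \<mu> A = 0"
  proof -
    have "integral\<^sup>L \<mu> A = (\<Sum>k<N. integral\<^sup>L \<mu> (\<lambda>x. f (x + intmul (int k) x1))) / of_nat N"
    proof -
      have "integral\<^sup>L \<mu> A = integral\<^sup>L \<mu> (\<lambda>x. \<Sum>k<N. f (x + intmul (int k) x1)) / of_nat N"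
        unfolding A_def by (rule integral_divide_zero)
      also have "integral\<^sup>L \<mu> (\<lambda>x. \<Sum>k<N. f (x + intmul (int k) x1)) = (\<Sum>k<N. integral\<^sup>L \<mu> (\<lambda>x. f (x + intmul (int k) x1)))"
        by (rule Bochner_Integration.integral_sum) (rule cont_integrable[OF cpt hp cont_transl[OF f]])
      finally show ?thesis .
    qed
    also have "\<dots> = 0" using haar_translate[OF hp f] f0 by simp
    finally show ?thesis .
  qed
  have Abound: "cmod (A x0) \<le> e" for x0
  proof -
    have iA: "integrable \<mu> A" by (rule cont_integrable[OF cpt hp Acont])
    have "integral\<^sup>L \<mu> (\<lambda>y. A x0 - A y) = A x0"
      using iA intA prob_space by (simp add: integral_diff)
    then have "cmod (A x0) = cmod (integral\<^sup>L \<mu> (\<lambda>y. A x0 - A y))" by simp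
    also have "\<dots> \<le> integral\<^sup>L \<mu> (\<lambda>y. cmod (A x0 - A y))" by (rule integral_norm_bound)
    also have "\<dots> \<le> e"
      by (rule integral_le_const) (use iA osc in \<open>auto intro!: integrable_norm\<close>)
    finally show ?thesis .
  qed
  define hh where "hh x = - (\<Sum>k<N. \<Sum>m<k. f (x + intmul (int m) x1)) / of_nat N" for x
  have hcont: "continuous_on UNIV hh"
    unfolding hh_def using N1 by (intro continuous_intros cont_transl[OF f]) simp
  have hdiff: "f x - (hh (x + x1) - hh x) = A x" for x
  proof -
    have "hh (x + x1) - hh x = - (\<Sum>k<N. (\<Sum>m<k. f (x + x1 + intmul (int m) x1)) - (\<Sum>m<k. f (x + intmul (int m) x1))) / of_nat N"
      unfolding hh_def by (simp add: diff_divide_distrib[symmetric] sum_subtractf)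
    also have "\<dots> = - (\<Sum>k<N. f (x + intmul (int k) x1) - f x) / of_nat N"
      by (simp only: tele_sum)
    also have "\<dots> = f x - A x"
      unfolding A_def using Npos by (simp add: sum_subtractf field_simps)
    finally show ?thesis by simp
  qed
  show ?thesis using hcont hdiff Abound by metis
qed

inductive_set alg0 :: "mat set \<Rightarrow> mat set" for S :: "mat set" where
  gen: "A \<in> S \<Longrightarrow> A \<in> alg0 S"
| add: "A \<in> alg0 S \<Longrightarrow> B \<in> alg0 S \<Longrightarrow> madd A B \<in> alg0 S"
| smult: "A \<in> alg0 S \<Longrightarrow> msmult c A \<in> alg0 S"
| mult: "A \<in> alg0 S \<Longrightarrow> B \<in> alg0 S \<Longrightarrow> mmult A B \<in> alg0 S"

lemma alg0_sub: "A \<in> alg0 S \<Longrightarrow> A \<in> star_alg S"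
  by (induction rule: alg0.induct) (auto intro: star_alg.intros)

lemma madj_mmult: "madj (mmult A B) = mmult (madj B) (madj A)"
  unfolding madj_def mmult_def
  by (intro ext) (simp flip: infsum_cnj add: mult.commute)

lemma madj_madd: "madj (madd A B) = madd (madj A) (madj B)"
  by (auto simp: madj_def madd_def)
lemma madj_msmult: "madj (msmult c A) = msmult (cnj c) (madj A)"
  by (auto simp: madj_def msmult_def)
lemma madj_madj: "madj (madj A) = A"
  by (auto simp: madj_def)
lemma madj_Vop: "madj Vop = Vinv"
  by (auto simp: madj_def Vop_def Vinv_def fun_eq_iff)
lemma madj_Vinv: "madj Vinv = Vop"
  by (auto simp: madj_def Vop_def Vinv_def fun_eq_iff)
lemma madj_Mop: "madj (Mop x1 g) = Mop x1 (\<lambda>x. cnj (g x))"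
  by (auto simp: madj_def Mop_def fun_eq_iff)

lemma char_cnj: "is_character ch \<Longrightarrow> is_character (\<lambda>x. cnj (ch x))"
  unfolding is_character_def by (auto intro: continuous_intros)

lemma star_alg_alg0:
  fixes x1 :: "'g::{topological_group_add, ab_group_add}"
  defines "S0 \<equiv> {Vop, Vinv} \<union> {Mop x1 ch | ch. is_character ch}"
  assumes "A \<in> star_alg S0"
  shows "A \<in> alg0 S0 \<and> madj A \<in> alg0 S0"
  using assms(2)
proof (induction rule: star_alg.induct)
  case (gen A)
  then have "madj A \<in> S0"
    unfolding S0_def by (auto simp: madj_Vop madj_Vinv madj_Mop intro: char_cnj)
  then show ?case using gen by (auto intro: alg0.gen)
next
  case (add A B) then show ?case by (auto simp: madj_madd intro: alg0.add)
next
  case (smult A c) then show ?case by (auto simp: madj_msmult intro: alg0.smult)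
next
  case (mult A B) then show ?case by (auto simp: madj_mmult intro: alg0.mult)
next
  case (adj A) then show ?case by (auto simp: madj_madj)
qed

lemma nice_star_alg:
  fixes x1 :: "'g::{topological_group_add, ab_group_add, t2_space}"
  assumes cpt: "compact (UNIV :: 'g set)"
    and "A \<in> star_alg ({Vop} \<union> {Mop x1 f | f. continuous_on UNIV f})"
  shows "nice A"
  using assms(2)
proof (induction rule: star_alg.induct)
  case (gen A)
  then show ?case
  proof
    assume "A \<in> {Vop}" then show ?thesis by (simp add: nice_Vop)
  next
    assume "A \<in> {Mop x1 f | f. continuous_on UNIV f}"
    then obtain g where g: "A = Mop x1 g" "continuous_on UNIV g" by blast
    obtain B where "\<And>x. cmod (g x) \<le> B" using cont_bounded[OF cpt g(2)] by blast
    then show ?thesis using g(1) nice_Mop by blast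
  qed
qed (auto intro: nice_madd nice_msmult nice_mmult nice_madj)

lemma in_cstar:
  assumes "nice A" "A \<in> star_alg S"
  shows "A \<in> cstar_alg S"
proof -
  have "msub A A = (\<lambda>i j. 0)" by (simp add: msub_def)
  then have lim: "(\<lambda>n. opnorm (msub A A)) \<longlonglongrightarrow> 0" by (simp add: opnorm_zero)
  have "\<exists>a. (\<forall>n. a n \<in> star_alg S) \<and> (\<lambda>n. opnorm (msub (a n) A)) \<longlonglongrightarrow> 0"
    by (rule exI[of _ "\<lambda>_. A"]) (use assms(2) lim in simp)
  then show ?thesis unfolding cstar_alg_def using nice_bounded'[OF assms(1)] by blast
qed

lemma band_approx:
  assumes "band K b"
  shows "band K (msub (der c b) (mcomm (Mop x1 h) b))"
  using assms by (auto simp: band_def msub_def mcomm_def Mop_multL Mop_multR der_def)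

theorem lemma3p12:
  fixes \<mu> :: "'g::{topological_group_add, ab_group_add, t2_space} measure"
    and x1 :: 'g
    and f :: "'g \<Rightarrow> complex"
  assumes "compact (UNIV :: 'g set)"
    and "infinite (UNIV :: 'g set)"
    and "haar_prob \<mu>"
    and "closure (range (\<lambda>n::int. intmul n x1)) = UNIV"
    and "continuous_on UNIV f"
    and "integral\<^sup>L \<mu> f = 0"
  shows "\<exists>\<delta>. is_derivation (Bsmall x1) (Balg x1) \<delta> \<and>
             \<delta> Vop = mmult Vop (Mop x1 f) \<and>
             \<delta> Vinv = msmult (-1) (mmult (Mop x1 f) Vinv) \<and>
             (\<forall>g\<in>trig_polys. \<delta> (Mop x1 g) = (\<lambda>i j. 0)) \<and>
             (\<forall>\<delta>'. (is_derivation (Bsmall x1) (Balg x1) \<delta>' \<and>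
                    \<delta>' Vop = mmult Vop (Mop x1 f) \<and>
                    \<delta>' Vinv = msmult (-1) (mmult (Mop x1 f) Vinv) \<and>
                    (\<forall>g\<in>trig_polys. \<delta>' (Mop x1 g) = (\<lambda>i j. 0)))
                   \<longrightarrow> (\<forall>b\<in>Bsmall x1. \<delta>' b = \<delta> b)) \<and>
             approx_inner (Bsmall x1) (Balg x1) \<delta> \<and>
             invariant_der (Bsmall x1) \<delta>"
proof -
  note cpt = assms(1) and hp = assms(3) and dense = assms(4) and fc = assms(5) and f0 = assms(6)
  define c where "c = (\<lambda>n. f (intmul n x1))"
  define \<delta> where "\<delta> = der c"
  define S where "S = {Vop} \<union> {Mop x1 g | g. continuous_on UNIV g}"
  define S0 where "S0 = {Vop, Vinv} \<union> {Mop x1 ch | ch. is_character ch}"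
  have Bs: "Bsmall x1 = star_alg S0" by (simp add: Bsmall_def S0_def)
  have Bg: "Balg x1 = cstar_alg S" by (simp add: Balg_def S_def)
  obtain Bf where Bf: "\<And>x. cmod (f x) \<le> Bf" using cont_bounded[OF cpt fc] by blast
  have cB: "cmod (c n) \<le> Bf" for n using Bf by (simp add: c_def)
  have niceS: "A \<in> star_alg S \<Longrightarrow> nice A" for A
    unfolding S_def by (rule nice_star_alg[OF cpt])
  have VS: "Vop \<in> star_alg S" by (auto simp: S_def intro: star_alg.gen)
  have MS: "continuous_on UNIV g \<Longrightarrow> Mop x1 g \<in> star_alg S" for g
    by (auto simp: S_def intro: star_alg.gen)
  have S0S: "A \<in> star_alg S0 \<Longrightarrow> A \<in> star_alg S" for A
  proof (induction rule: star_alg.induct)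
    case (gen A)
    then show ?case unfolding S0_def
      using VS star_alg.adj[OF VS] MS by (auto simp: madj_Vop is_character_def)
  qed (auto intro: star_alg.intros)
  have toalg0: "A \<in> Bsmall x1 \<Longrightarrow> A \<in> alg0 S0" for A
    using star_alg_alg0[of _ x1] unfolding Bs S0_def by blast
  have niceB: "A \<in> Bsmall x1 \<Longrightarrow> nice A" for A using niceS S0S Bs by auto
  have dS: "A \<in> alg0 S0 \<Longrightarrow> \<delta> A \<in> star_alg S" for A
  proof (induction rule: alg0.induct)
    case (gen A)
    then show ?case
    proof (unfold S0_def, elim UnE insertE)
      assume "A = Vop" then show ?thesis
        by (simp add: \<delta>_def c_def der_Vop) (rule star_alg.mult[OF VS MS[OF fc]])
    next
      assume "A = Vinv" then show ?thesis
        by (simp add: \<delta>_def c_def der_Vinv)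
           (rule star_alg.smult, rule star_alg.mult[OF MS[OF fc]], simp add: madj_Vop[symmetric] star_alg.adj[OF VS])
    next
      assume "A \<in> {}" then show ?thesis by simp
    next
      assume "A \<in> {Mop x1 ch | ch. is_character ch}"
      then obtain ch where "A = Mop x1 ch" by blast
      then have "\<delta> A = msmult 0 Vop" by (simp add: \<delta>_def der_Mop msmult_def)
      then show ?thesis using star_alg.smult[OF VS] by simp
    qed
  next
    case (add A B) then show ?case by (simp add: \<delta>_def der_madd star_alg.add)
  next
    case (smult A z) then show ?case by (simp add: \<delta>_def der_msmult star_alg.smult)
  next
    case (mult A B)
    have "A \<in> star_alg S" "B \<in> star_alg S" using mult(1,2) alg0_sub S0S by blast+
    moreover obtain K C where "band K A" using niceS[OF \<open>A \<in> star_alg S\<close>] by (auto simp: nice_def)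
    ultimately show ?case using mult(3,4)
      by (simp add: \<delta>_def der_mmult star_alg.add star_alg.mult)
  qed
  have der1: "is_derivation (Bsmall x1) (Balg x1) \<delta>"
    unfolding is_derivation_def
  proof (intro conjI ballI allI)
    fix a assume a: "a \<in> Bsmall x1"
    have "\<delta> a \<in> star_alg S" using dS toalg0 a by blast
    then show "\<delta> a \<in> Balg x1" unfolding Bg using in_cstar niceS by blast
  next
    fix a b show "\<delta> (madd a b) = madd (\<delta> a) (\<delta> b)" by (simp add: \<delta>_def der_madd)
  next
    fix z a show "\<delta> (msmult z a) = msmult z (\<delta> a)" by (simp add: \<delta>_def der_msmult)
  next
    fix a b assume a: "a \<in> Bsmall x1"
    obtain K C where "band K a" using niceB[OF a] by (auto simp: nice_def)
    then show "\<delta> (mmult a b) = madd (mmult (\<delta> a) b) (mmult a (\<delta> b))"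
      by (simp add: \<delta>_def der_mmult)
  qed
  have dV: "\<delta> Vop = mmult Vop (Mop x1 f)" by (simp add: \<delta>_def c_def der_Vop)
  have dVi: "\<delta> Vinv = msmult (-1) (mmult (Mop x1 f) Vinv)" by (simp add: \<delta>_def c_def der_Vinv)
  have dM: "\<forall>g\<in>trig_polys. \<delta> (Mop x1 g) = (\<lambda>i j. 0)" by (simp add: \<delta>_def der_Mop)
  have uniq: "\<forall>\<delta>'. (is_derivation (Bsmall x1) (Balg x1) \<delta>' \<and>
                    \<delta>' Vop = mmult Vop (Mop x1 f) \<and>
                    \<delta>' Vinv = msmult (-1) (mmult (Mop x1 f) Vinv) \<and>
                    (\<forall>g\<in>trig_polys. \<delta>' (Mop x1 g) = (\<lambda>i j. 0)))
                   \<longrightarrow> (\<forall>b\<in>Bsmall x1. \<delta>' b = \<delta> b)"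
  proof (intro allI impI ballI)
    fix \<delta>' b
    assume H: "is_derivation (Bsmall x1) (Balg x1) \<delta>' \<and>
                    \<delta>' Vop = mmult Vop (Mop x1 f) \<and>
                    \<delta>' Vinv = msmult (-1) (mmult (Mop x1 f) Vinv) \<and>
                    (\<forall>g\<in>trig_polys. \<delta>' (Mop x1 g) = (\<lambda>i j. 0))"
    assume b: "b \<in> Bsmall x1"
    have inB: "A \<in> alg0 S0 \<Longrightarrow> A \<in> Bsmall x1" for A using alg0_sub Bs by blast
    have chtrig: "is_character ch \<Longrightarrow> ch \<in> trig_polys" for ch :: "'g \<Rightarrow> complex"
      unfolding trig_polys_def
      by (rule CollectI, rule exI[of _ "{ch}"], rule exI[of _ "\<lambda>_. 1"]) auto
    have "A \<in> alg0 S0 \<Longrightarrow> \<delta>' A = \<delta> A" for A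
    proof (induction rule: alg0.induct)
      case (gen A)
      then show ?case unfolding S0_def using H dV dVi dM chtrig by auto
    next
      case (add A B) then show ?case using H der1 inB unfolding is_derivation_def by auto
    next
      case (smult A z) then show ?case using H der1 inB unfolding is_derivation_def by auto
    next
      case (mult A B) then show ?case using H der1 inB unfolding is_derivation_def by auto
    qed
    then show "\<delta>' b = \<delta> b" using toalg0[OF b] by blast
  qed
  have ai: "approx_inner (Bsmall x1) (Balg x1) \<delta>"
  proof -
    have "\<forall>j::nat. \<exists>h. continuous_on UNIV h \<and> (\<forall>x. cmod (f x - (h (x + x1) - h x)) \<le> 1 / real (Suc j))"
      using cobound[OF cpt hp dense fc f0] by simp
    then obtain H where H: "\<And>j. continuous_on UNIV (H j)"
      "\<And>j x. cmod (f x - (H j (x + x1) - H j x)) \<le> 1 / real (Suc j)" by metis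
    define y where "y j = Mop x1 (H j)" for j
    have yB: "y j \<in> Balg x1" for j
      unfolding Bg y_def using in_cstar niceS MS[OF H(1)] by blast
    have conv: "(\<lambda>j. opnorm (msub (\<delta> b) (mcomm (y j) b))) \<longlonglongrightarrow> 0" if b: "b \<in> Bsmall x1" for b
    proof -
      obtain K C where KC: "band K b" "ebnd C b" using niceB[OF b] by (auto simp: nice_def)
      define D where "D = real (2 * K + 1) * (real K * C)"
      have up: "opnorm (msub (\<delta> b) (mcomm (y j) b)) \<le> D * inverse (real (Suc j))" for j
      proof -
        have e: "ebnd (real K * (1 / real (Suc j)) * C) (msub (\<delta> b) (mcomm (y j) b))"
          unfolding \<delta>_def c_def y_def by (rule approx_entry[where h="H j" and f=f, OF H(2)[of _ j] KC])
        have bd: "band K (msub (\<delta> b) (mcomm (y j) b))"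
          unfolding \<delta>_def y_def by (rule band_approx[OF KC(1)])
        show ?thesis using opnorm_le[OF bd e] by (simp add: D_def field_simps)
      qed
      have lo: "0 \<le> opnorm (msub (\<delta> b) (mcomm (y j) b))" for j
      proof -
        have e: "ebnd (real K * (1 / real (Suc j)) * C) (msub (\<delta> b) (mcomm (y j) b))"
          unfolding \<delta>_def c_def y_def by (rule approx_entry[where h="H j" and f=f, OF H(2)[of _ j] KC])
        have bd: "band K (msub (\<delta> b) (mcomm (y j) b))"
          unfolding \<delta>_def y_def by (rule band_approx[OF KC(1)])
        show ?thesis by (rule opnorm_ge0[OF nice_bounded[OF bd e]])
      qed
      have "(\<lambda>j. D * inverse (real (Suc j))) \<longlonglongrightarrow> D * 0"
        by (intro tendsto_mult tendsto_const LIMSEQ_inverse_real_of_nat)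
      then show ?thesis
        using tendsto_sandwich[of "\<lambda>_. 0" "\<lambda>j. opnorm (msub (\<delta> b) (mcomm (y j) b))" sequentially
            "\<lambda>j. D * inverse (real (Suc j))" 0] lo up by simp
    qed
    show ?thesis unfolding approx_inner_def using yB conv by blast
  qed
  have inv: "invariant_der (Bsmall x1) \<delta>"
    unfolding invariant_der_def \<delta>_def by (simp add: der_inv)
  show ?thesis using der1 dV dVi dM uniq ai inv by blast
qed

end
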